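(* Let $\{\hat f_n\}_{n\in\mathbb N}\subset L_0(\hat\nabla,\hat\mu)$, and for each $n$ let $\omega\mapsto f_n(\omega)\in L_0(\nabla_\omega,\mu_\omega)$ be the measurable section representing $\hat f_n$. Then $\inf_{n}\hat f_n$ exists in $L_0(\hat\nabla,\hat\mu)$ if and only if $\inf_n f_n(\omega)$ exists in $L_0(\nabla_\omega,\mu_\omega)$ for $\lambda$-almost every $\omega\in\Omega$. In that case $\big(\inf_n \hat f_n\big)(\omega)=\inf_n f_n(\omega)$ for $\lambda$-almost every $\omega\in\Omega$.
   Context: $(\Omega,\Sigma,\lambda)$ is a measure space with finite measure $\lambda$; $L_0(\Omega)$ is the algebra of (classes of a.e. equal) measurable real functions on $\Omega$. For each $\omega\in\Omega$, $\nabla_\omega$ is a complete Boolean algebra carrying a strictly positive finite real-valued measure $\mu_\omega$, with metric $\rho_\omega(e,g)=\mu_\omega(e\,\Delta\, g)$. The assignment $\omega\mapsto\nabla_\omega$ together with a set $L$ of sections forms a measurable bundle of Boolean algebras over $\Omega$. $\hat\nabla$ denotes the complete Boolean algebra of classes (modulo a.e. equality) of measurable sections $\omega\mapsto e(\omega)\in\nabla_\omega$, and $\hat\mu:\hat\nabla\to L_0(\Omega)$ is the strictly positive $L_0(\Omega)$-valued measure given by $\hat\mu(\hat e)=$ the class of $\omega\mapsto\mu_\omega(e(\omega))$. $L_0(\hat\nabla,\hat\mu)$ is the order complete vector lattice $C_\infty(Q(\hat\nabla))$, and $L_0(\nabla_\omega,\mu_\omega)$ is the usual space of measurable functions (mod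 null sets) over $(\nabla_\omega,\mu_\omega)$ with metric $\rho_\omega(a,b)=\int\frac{|a-b|}{1+|a-b|}d\mu_\omega$. It is known that $L_0(\hat\nabla,\hat\mu)$ is identified with the space of classes (mod a.e. equality) of measurable sections $\omega\mapsto f(\omega)\in L_0(\nabla_\omega,\mu_\omega)$; under this identification $\hat f$ corresponds to a section $\omega\mapsto f(\omega)$, and $\hat f\le\hat g$ iff $f(\omega)\le g(\omega)$ for a.e. $\omega$. *)

theory Defs
  imports "HOL-Analysis.Analysis"
begin

text \<open>
  Each fibre Boolean algebra \<nabla>_\<omega> with its strictly positive finite measure \<mu>_\<omega>
  is realised as the measure algebra of a finite measure space M \<omega>
  (elements: sets of M \<omega> modulo null sets).  L_0(\<nabla>_\<omega>,\<mu>_\<omega>) is then the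
  space of real Borel functions on M \<omega> modulo a.e. equality.
\<close>

definition rho :: "'b measure \<Rightarrow> 'b set \<Rightarrow> 'b set \<Rightarrow> real" where
  "rho N e g = measure N ((e - g) \<union> (g - e))"

definition bool_bundle :: "'a measure \<Rightarrow> ('a \<Rightarrow> 'b measure) \<Rightarrow> ('a \<Rightarrow> 'b set) set \<Rightarrow> bool" where
  "bool_bundle \<Lambda> M L \<longleftrightarrow>
     finite_measure \<Lambda> \<and>
     (\<forall>\<omega>\<in>space \<Lambda>. finite_measure (M \<omega>)) \<and>
     (\<forall>e\<in>L. \<forall>\<omega>\<in>space \<Lambda>. e \<omega> \<in> sets (M \<omega>)) \<and>
     (\<lambda>\<omega>. {}) \<in> L \<and>
     (\<forall>e\<in>L. \<forall>g\<in>L. (\<lambda>\<omega>. e \<omega> \<union> g \<omega>) \<in> L) \<and>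
     (\<forall>e\<in>L. (\<lambda>\<omega>. space (M \<omega>) - e \<omega>) \<in> L) \<and>
     (\<forall>e\<in>L. (\<lambda>\<omega>. measure (M \<omega>) (e \<omega>)) \<in> borel_measurable \<Lambda>) \<and>
     (\<forall>\<omega>\<in>space \<Lambda>. \<forall>A\<in>sets (M \<omega>). \<forall>\<epsilon>>0. \<exists>e\<in>L. rho (M \<omega>) (e \<omega>) A < \<epsilon>)"

definition step_section :: "'a measure \<Rightarrow> ('a \<Rightarrow> 'b set) set \<Rightarrow> ('a \<Rightarrow> 'b set) \<Rightarrow> bool" where
  "step_section \<Lambda> L s \<longleftrightarrow>
     (\<exists>n::nat. \<exists>A c. (\<forall>i<n. A i \<in> sets \<Lambda> \<and> c i \<in> L) \<and> disjoint_family_on A {..<n} \<and>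
        (\<Union>i<n. A i) = space \<Lambda> \<and> (\<forall>i<n. \<forall>\<omega>\<in>A i. s \<omega> = c i \<omega>))"

definition meas_bool_section ::
  "'a measure \<Rightarrow> ('a \<Rightarrow> 'b measure) \<Rightarrow> ('a \<Rightarrow> 'b set) set \<Rightarrow> ('a \<Rightarrow> 'b set) \<Rightarrow> bool" where
  "meas_bool_section \<Lambda> M L e \<longleftrightarrow>
     (\<forall>\<omega>\<in>space \<Lambda>. e \<omega> \<in> sets (M \<omega>)) \<and>
     (\<exists>s. (\<forall>k. step_section \<Lambda> L (s k)) \<and>
          (AE \<omega> in \<Lambda>. (\<lambda>k. rho (M \<omega>) (s k \<omega>) (e \<omega>)) \<longlonglongrightarrow> 0))"

text \<open>Measurable sections \<omega> \<mapsto> f(\<omega>) \<in> L_0(\<nabla>_\<omega>,\<mu>_\<omega>): all spectral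
  idempotents [f(\<omega>) < t] form measurable sections of the Boolean bundle.\<close>
definition L0_section ::
  "'a measure \<Rightarrow> ('a \<Rightarrow> 'b measure) \<Rightarrow> ('a \<Rightarrow> 'b set) set \<Rightarrow> ('a \<Rightarrow> 'b \<Rightarrow> real) \<Rightarrow> bool" where
  "L0_section \<Lambda> M L f \<longleftrightarrow>
     (\<forall>\<omega>\<in>space \<Lambda>. f \<omega> \<in> borel_measurable (M \<omega>)) \<and>
     (\<forall>t::real. meas_bool_section \<Lambda> M L (\<lambda>\<omega>. {x \<in> space (M \<omega>). f \<omega> x < t}))"

definition is_inf_L0 :: "'b measure \<Rightarrow> (nat \<Rightarrow> 'b \<Rightarrow> real) \<Rightarrow> ('b \<Rightarrow> real) \<Rightarrow> bool" where
  "is_inf_L0 N F h \<longleftrightarrow>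
     h \<in> borel_measurable N \<and>
     (\<forall>n. AE x in N. h x \<le> F n x) \<and>
     (\<forall>g\<in>borel_measurable N. (\<forall>n. AE x in N. g x \<le> F n x) \<longrightarrow> (AE x in N. g x \<le> h x))"

text \<open>Order on L_0(\<nabla>^,\<mu>^) identified with classes of measurable sections:
  f^ \<le> g^ iff f(\<omega>) \<le> g(\<omega>) in L_0(\<nabla>_\<omega>,\<mu>_\<omega>) for a.e. \<omega>.\<close>
definition hat_le :: "'a measure \<Rightarrow> ('a \<Rightarrow> 'b measure) \<Rightarrow> ('a \<Rightarrow> 'b \<Rightarrow> real) \<Rightarrow> ('a \<Rightarrow> 'b \<Rightarrow> real) \<Rightarrow> bool" where
  "hat_le \<Lambda> M f g \<longleftrightarrow> (AE \<omega> in \<Lambda>. AE x in M \<omega>. f \<omega> x \<le> g \<omega> x)"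

definition is_inf_hat ::
  "'a measure \<Rightarrow> ('a \<Rightarrow> 'b measure) \<Rightarrow> ('a \<Rightarrow> 'b set) set \<Rightarrow> (nat \<Rightarrow> 'a \<Rightarrow> 'b \<Rightarrow> real) \<Rightarrow> ('a \<Rightarrow> 'b \<Rightarrow> real) \<Rightarrow> bool" where
  "is_inf_hat \<Lambda> M L F g \<longleftrightarrow>
     L0_section \<Lambda> M L g \<and>
     (\<forall>n. hat_le \<Lambda> M g (F n)) \<and>
     (\<forall>h. L0_section \<Lambda> M L h \<and> (\<forall>n. hat_le \<Lambda> M h (F n)) \<longrightarrow> hat_le \<Lambda> M h g)"

end

theory Submission
  imports Defs
begin


lemma rho_nonneg: "0 \<le> rho N a b" by (simp add: rho_def)

lemma rho_sym: "rho N a b = rho N b a" by (simp add: rho_def Un_commute)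

lemma rho_self: "rho N a a = 0" by (simp add: rho_def)

lemma rho_tri:
  assumes "finite_measure N" "a \<in> sets N" "b \<in> sets N" "c \<in> sets N"
  shows "rho N a c \<le> rho N a b + rho N b c"
proof -
  interpret finite_measure N by fact
  have "measure N ((a - c) \<union> (c - a)) \<le> measure N (((a - b) \<union> (b - a)) \<union> ((b - c) \<union> (c - b)))"
    using assms by (intro finite_measure_mono) auto
  also have "\<dots> \<le> measure N ((a - b) \<union> (b - a)) + measure N ((b - c) \<union> (c - b))"
    using assms by (intro measure_Un_le) auto
  finally show ?thesis by (simp add: rho_def)
qed

lemma rho_Un:
  assumes "finite_measure N" "a \<in> sets N" "b \<in> sets N" "a' \<in> sets N" "b' \<in> sets N"
  shows "rho N (a \<union> a') (b \<union> b') \<le> rho N a b + rho N a' b'"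
proof -
  interpret finite_measure N by fact
  have "measure N (((a \<union> a') - (b \<union> b')) \<union> ((b \<union> b') - (a \<union> a')))
     \<le> measure N (((a - b) \<union> (b - a)) \<union> ((a' - b') \<union> (b' - a')))"
    using assms by (intro finite_measure_mono) auto
  also have "\<dots> \<le> measure N ((a - b) \<union> (b - a)) + measure N ((a' - b') \<union> (b' - a'))"
    using assms by (intro measure_Un_le) auto
  finally show ?thesis by (simp add: rho_def)
qed

lemma rho_UN_lessThan:
  fixes n :: nat
  assumes "finite_measure N" "\<And>k. a k \<in> sets N" "\<And>k. b k \<in> sets N"
  shows "rho N (\<Union>k<n. a k) (\<Union>k<n. b k) \<le> (\<Sum>k<n. rho N (a k) (b k))"
proof (induction n)
  case 0 then show ?case by (simp add: rho_def)
next
  case (Suc n)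
  have "rho N (\<Union>k<Suc n. a k) (\<Union>k<Suc n. b k) = rho N ((\<Union>k<n. a k) \<union> a n) ((\<Union>k<n. b k) \<union> b n)"
    by (simp add: lessThan_Suc Un_commute)
  also have "\<dots> \<le> rho N (\<Union>k<n. a k) (\<Union>k<n. b k) + rho N (a n) (b n)"
    using assms by (intro rho_Un) auto
  finally show ?case using Suc by simp
qed

lemma rho_compl:
  assumes "a \<subseteq> space N" "b \<subseteq> space N"
  shows "rho N (space N - a) (space N - b) = rho N a b"
proof -
  have "((space N - a) - (space N - b)) \<union> ((space N - b) - (space N - a)) = (a - b) \<union> (b - a)"
    using assms by auto
  then show ?thesis by (simp add: rho_def)
qed

lemma rho_diff_le:
  assumes "finite_measure N" "a \<in> sets N" "b \<in> sets N" "c \<in> sets N"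
  shows "\<bar>rho N a b - rho N a c\<bar> \<le> rho N b c"
  using rho_tri[OF assms(1,2,3,4)] rho_tri[OF assms(1,2,4,3)] rho_sym[of N b c] by linarith



locale BB =
  fixes \<Lambda> :: "'a measure" and M :: "'a \<Rightarrow> 'b measure" and L :: "('a \<Rightarrow> 'b set) set"
  assumes bb: "bool_bundle \<Lambda> M L"
begin

lemma finL: "finite_measure \<Lambda>" using bb by (simp add: bool_bundle_def)
lemma finM: "\<omega> \<in> space \<Lambda> \<Longrightarrow> finite_measure (M \<omega>)" using bb by (simp add: bool_bundle_def)
lemma L_sets: "e \<in> L \<Longrightarrow> \<omega> \<in> space \<Lambda> \<Longrightarrow> e \<omega> \<in> sets (M \<omega>)" using bb by (simp add: bool_bundle_def)
lemma L_empty: "(\<lambda>\<omega>. {}) \<in> L" using bb by (simp add: bool_bundle_def)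
lemma L_Un: "e \<in> L \<Longrightarrow> g \<in> L \<Longrightarrow> (\<lambda>\<omega>. e \<omega> \<union> g \<omega>) \<in> L" using bb by (simp add: bool_bundle_def)
lemma L_compl: "e \<in> L \<Longrightarrow> (\<lambda>\<omega>. space (M \<omega>) - e \<omega>) \<in> L" using bb by (simp add: bool_bundle_def)
lemma L_meas: "e \<in> L \<Longrightarrow> (\<lambda>\<omega>. measure (M \<omega>) (e \<omega>)) \<in> borel_measurable \<Lambda>" using bb by (simp add: bool_bundle_def)

lemma L_diff: "e \<in> L \<Longrightarrow> g \<in> L \<Longrightarrow> \<exists>h\<in>L. \<forall>\<omega>\<in>space \<Lambda>. h \<omega> = e \<omega> - g \<omega>"
proof -
  assume e: "e \<in> L" and g: "g \<in> L"
  let ?h = "\<lambda>\<omega>. space (M \<omega>) - ((space (M \<omega>) - e \<omega>) \<union> g \<omega>)"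
  have hL: "?h \<in> L" using L_compl[OF L_Un[OF L_compl[OF e] g]] by simp
  have hE: "\<forall>\<omega>\<in>space \<Lambda>. ?h \<omega> = e \<omega> - g \<omega>"
  proof
    fix \<omega> assume "\<omega> \<in> space \<Lambda>"
    then have "e \<omega> \<subseteq> space (M \<omega>)" using L_sets[OF e] by (simp add: sets.sets_into_space)
    then show "?h \<omega> = e \<omega> - g \<omega>" by auto
  qed
  show ?thesis apply (rule bexI[where x="?h"]) using hE hL by simp_all
qed

lemma L_symdiff: "e \<in> L \<Longrightarrow> g \<in> L \<Longrightarrow> \<exists>h\<in>L. \<forall>\<omega>\<in>space \<Lambda>. h \<omega> = (e \<omega> - g \<omega>) \<union> (g \<omega> - e \<omega>)"
proof -
  assume e: "e \<in> L" and g: "g \<in> L"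
  obtain h1 where h1: "h1 \<in> L" "\<forall>\<omega>\<in>space \<Lambda>. h1 \<omega> = e \<omega> - g \<omega>" using L_diff[OF e g] by blast
  obtain h2 where h2: "h2 \<in> L" "\<forall>\<omega>\<in>space \<Lambda>. h2 \<omega> = g \<omega> - e \<omega>" using L_diff[OF g e] by blast
  have "\<forall>\<omega>\<in>space \<Lambda>. h1 \<omega> \<union> h2 \<omega> = (e \<omega> - g \<omega>) \<union> (g \<omega> - e \<omega>)"
    using h1(2) h2(2) by simp
  then show ?thesis apply (rule bexI[where x="\<lambda>\<omega>. h1 \<omega> \<union> h2 \<omega>"]) using L_Un[OF h1(1) h2(1)] by simp_all
qed

lemma step_sectionE:
  assumes "step_section \<Lambda> L s"
  obtains n :: nat and A c where "\<forall>i<n. A i \<in> sets \<Lambda> \<and> c i \<in> L" "disjoint_family_on A {..<n}"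
    "(\<Union>i<n. A i) = space \<Lambda>" "\<forall>i<n. \<forall>\<omega>\<in>A i. s \<omega> = c i \<omega>"
  using assms unfolding step_section_def by (elim exE conjE) (rule that)

lemma step_sets:
  assumes "step_section \<Lambda> L s" "\<omega> \<in> space \<Lambda>" shows "s \<omega> \<in> sets (M \<omega>)"
proof -
  obtain n :: nat and A c where A1: "\<forall>i<n. A i \<in> sets \<Lambda> \<and> c i \<in> L" and A2: "disjoint_family_on A {..<n}"
    and A3: "(\<Union>i<n. A i) = space \<Lambda>" and A4: "\<forall>i<n. \<forall>\<omega>\<in>A i. s \<omega> = c i \<omega>"
    by (rule step_sectionE[OF assms(1)])
  have "\<omega> \<in> (\<Union>i<n. A i)" using assms(2) A3 by simp
  then obtain i where i: "i < n" "\<omega> \<in> A i" by auto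
  have "s \<omega> = c i \<omega>" using A4 i by simp
  moreover have "c i \<in> L" using A1 i by simp
  ultimately show ?thesis using L_sets assms(2) by simp
qed

lemma step_binop:
  assumes s: "step_section \<Lambda> L s" and t: "step_section \<Lambda> L t"
    and \<Phi>: "\<And>c d. c \<in> L \<Longrightarrow> d \<in> L \<Longrightarrow> \<exists>e\<in>L. \<forall>\<omega>\<in>space \<Lambda>. e \<omega> = \<Phi> \<omega> (c \<omega>) (d \<omega>)"
  shows "step_section \<Lambda> L (\<lambda>\<omega>. \<Phi> \<omega> (s \<omega>) (t \<omega>))"
proof -
  obtain n :: nat and A c where A: "\<forall>i<n. A i \<in> sets \<Lambda> \<and> c i \<in> L" "disjoint_family_on A {..<n}"
    "(\<Union>i<n. A i) = space \<Lambda>" "\<forall>i<n. \<forall>\<omega>\<in>A i. s \<omega> = c i \<omega>"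
    by (rule step_sectionE[OF s])
  obtain m :: nat and B d where B: "\<forall>i<m. B i \<in> sets \<Lambda> \<and> d i \<in> L" "disjoint_family_on B {..<m}"
    "(\<Union>i<m. B i) = space \<Lambda>" "\<forall>i<m. \<forall>\<omega>\<in>B i. t \<omega> = d i \<omega>"
    by (rule step_sectionE[OF t])
  define C where "C i = A (i div m) \<inter> B (i mod m)" for i
  define e where "e i = (SOME e. e \<in> L \<and> (\<forall>\<omega>\<in>space \<Lambda>. e \<omega> = \<Phi> \<omega> (c (i div m) \<omega>) (d (i mod m) \<omega>)))" for i
  have idx: "i div m < n \<and> i mod m < m" if "i < n * m" for i
  proof -
    have "m > 0" using that by (cases m) auto
    then show ?thesis using that by (simp add: less_mult_imp_div_less)
  qed
  have e: "e i \<in> L \<and> (\<forall>\<omega>\<in>space \<Lambda>. e i \<omega> = \<Phi> \<omega> (c (i div m) \<omega>) (d (i mod m) \<omega>))" if "i < n * m" for i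
  proof -
    have "c (i div m) \<in> L" "d (i mod m) \<in> L" using idx[OF that] A(1) B(1) by auto
    from \<Phi>[OF this] obtain e0 where
      e0: "e0 \<in> L \<and> (\<forall>\<omega>\<in>space \<Lambda>. e0 \<omega> = \<Phi> \<omega> (c (i div m) \<omega>) (d (i mod m) \<omega>))" by auto
    then show ?thesis unfolding e_def
      by (rule someI[where P="\<lambda>e. e \<in> L \<and> (\<forall>\<omega>\<in>space \<Lambda>. e \<omega> = \<Phi> \<omega> (c (i div m) \<omega>) (d (i mod m) \<omega>))"])
  qed
  have 1: "\<forall>i<n*m. C i \<in> sets \<Lambda> \<and> e i \<in> L"
    using idx A(1) B(1) e by (auto simp: C_def)
  have 2: "disjoint_family_on C {..<n*m}"
    unfolding disjoint_family_on_def
  proof (intro ballI impI)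
    fix i j assume ij: "i \<in> {..<n*m}" "j \<in> {..<n*m}" "i \<noteq> j"
    then have "i div m \<noteq> j div m \<or> i mod m \<noteq> j mod m" by (metis div_mod_decomp)
    moreover have di: "i div m < n" "i mod m < m" "j div m < n" "j mod m < m" using idx ij by auto
    ultimately show "C i \<inter> C j = {}"
    proof (cases "i div m = j div m")
      case True
      then have "i mod m \<noteq> j mod m" using \<open>i div m \<noteq> j div m \<or> i mod m \<noteq> j mod m\<close> by simp
      then have "B (i mod m) \<inter> B (j mod m) = {}" using disjoint_family_onD[OF B(2)] di by simp
      then show ?thesis unfolding C_def by blast
    next
      case False
      then have "A (i div m) \<inter> A (j div m) = {}" using disjoint_family_onD[OF A(2)] di by simp
      then show ?thesis unfolding C_def by blast
    qed
  qed
  have 3: "(\<Union>i<n*m. C i) = space \<Lambda>"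
  proof
    show "(\<Union>i<n*m. C i) \<subseteq> space \<Lambda>" using 1 sets.sets_into_space by (intro UN_least) auto
    show "space \<Lambda> \<subseteq> (\<Union>i<n*m. C i)"
    proof
      fix \<omega> assume w: "\<omega> \<in> space \<Lambda>"
      have "\<omega> \<in> (\<Union>i<n. A i)" "\<omega> \<in> (\<Union>i<m. B i)" using w A(3) B(3) by simp_all
      then obtain i j where "i < n" "\<omega> \<in> A i" "j < m" "\<omega> \<in> B j" by auto
      moreover have "i * m + j < n * m"
      proof -
        have "i * m + j < i * m + m" using \<open>j < m\<close> by simp
        also have "\<dots> = Suc i * m" by simp
        also have "\<dots> \<le> n * m" using \<open>i < n\<close> by (intro mult_right_mono) auto
        finally show ?thesis .
      qed
      ultimately show "\<omega> \<in> (\<Union>i<n*m. C i)"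
        unfolding C_def by (intro UN_I[of "i*m+j"]) auto
    qed
  qed
  have 4: "\<forall>i<n*m. \<forall>\<omega>\<in>C i. \<Phi> \<omega> (s \<omega>) (t \<omega>) = e i \<omega>"
  proof (intro allI impI ballI)
    fix i \<omega> assume i: "i < n * m" and w: "\<omega> \<in> C i"
    have ws: "\<omega> \<in> space \<Lambda>" using 1 i w sets.sets_into_space by (meson subsetD)
    have "s \<omega> = c (i div m) \<omega>" using A(4) idx[OF i] w by (simp add: C_def)
    moreover have "t \<omega> = d (i mod m) \<omega>" using B(4) idx[OF i] w by (simp add: C_def)
    ultimately show "\<Phi> \<omega> (s \<omega>) (t \<omega>) = e i \<omega>" using e[OF i] ws by simp
  qed
  show ?thesis unfolding step_section_def
    by (intro exI[of _ "n*m"] exI[of _ C] exI[of _ e] conjI 1 2 3 4)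
qed

lemma step_L: "c \<in> L \<Longrightarrow> step_section \<Lambda> L c"
  unfolding step_section_def
  by (intro exI[of _ "1"] exI[of _ "\<lambda>_. space \<Lambda>"] exI[of _ "\<lambda>_. c"]) (auto simp: disjoint_family_on_def)

lemma step_Un: "step_section \<Lambda> L s \<Longrightarrow> step_section \<Lambda> L t \<Longrightarrow> step_section \<Lambda> L (\<lambda>\<omega>. s \<omega> \<union> t \<omega>)"
  by (rule step_binop[of s t "\<lambda>\<omega> a b. a \<union> b"], assumption, assumption)
     (rule bexI[where x="\<lambda>\<omega>. c \<omega> \<union> d \<omega>" for c d], rule ballI, rule refl, rule L_Un)

lemma step_compl: "step_section \<Lambda> L s \<Longrightarrow> step_section \<Lambda> L (\<lambda>\<omega>. space (M \<omega>) - s \<omega>)"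
  by (rule step_binop[of s s "\<lambda>\<omega> a b. space (M \<omega>) - a"], assumption, assumption)
     (rule bexI[where x="\<lambda>\<omega>. space (M \<omega>) - c \<omega>" for c], rule ballI, rule refl, rule L_compl)

lemma step_symdiff: "step_section \<Lambda> L s \<Longrightarrow> step_section \<Lambda> L t \<Longrightarrow>
   step_section \<Lambda> L (\<lambda>\<omega>. (s \<omega> - t \<omega>) \<union> (t \<omega> - s \<omega>))"
  by (rule step_binop[of s t "\<lambda>\<omega> a b. (a - b) \<union> (b - a)"], assumption, assumption)
     (rule L_symdiff)

lemma step_meas:
  assumes "step_section \<Lambda> L s"
  shows "(\<lambda>\<omega>. measure (M \<omega>) (s \<omega>)) \<in> borel_measurable \<Lambda>"
proof -
  obtain n :: nat and A c where A: "\<forall>i<n. A i \<in> sets \<Lambda> \<and> c i \<in> L" "disjoint_family_on A {..<n}"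
    "(\<Union>i<n. A i) = space \<Lambda>" "\<forall>i<n. \<forall>\<omega>\<in>A i. s \<omega> = c i \<omega>"
    by (rule step_sectionE[OF assms])
  have eq: "measure (M \<omega>) (s \<omega>) = (\<Sum>i<n. indicator (A i) \<omega> * measure (M \<omega>) (c i \<omega>))"
    if w: "\<omega> \<in> space \<Lambda>" for \<omega>
  proof -
    obtain i where i: "i < n" "\<omega> \<in> A i" using A(3) w by blast
    have "(\<Sum>j<n. indicator (A j) \<omega> * measure (M \<omega>) (c j \<omega>))
        = (\<Sum>j<n. if j = i then measure (M \<omega>) (c i \<omega>) else 0)"
    proof (rule sum.cong[OF refl])
      fix j assume "j \<in> {..<n}"
      then show "indicator (A j) \<omega> * measure (M \<omega>) (c j \<omega>) = (if j = i then measure (M \<omega>) (c i \<omega>) else 0)"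
        using A(2) i unfolding disjoint_family_on_def by (auto simp: indicator_def)
    qed
    also have "\<dots> = measure (M \<omega>) (c i \<omega>)" using i by simp
    finally show ?thesis using A(4) i by simp
  qed
  have "(\<lambda>\<omega>. \<Sum>i<n. indicator (A i) \<omega> * measure (M \<omega>) (c i \<omega>)) \<in> borel_measurable \<Lambda>"
    using A(1) L_meas by (intro borel_measurable_sum borel_measurable_times borel_measurable_indicator) auto
  then show ?thesis by (rule measurable_cong[THEN iffD2, rotated]) (rule eq)
qed

lemma step_rho_meas:
  assumes "step_section \<Lambda> L s" "step_section \<Lambda> L t"
  shows "(\<lambda>\<omega>. rho (M \<omega>) (s \<omega>) (t \<omega>)) \<in> borel_measurable \<Lambda>"
  unfolding rho_def using step_meas[OF step_symdiff[OF assms]] by simp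

end


lemma (in finite_measure) AE_tendsto_measure:
  fixes X :: "nat \<Rightarrow> 'a \<Rightarrow> real"
  assumes meas: "\<And>j. X j \<in> borel_measurable M" and ae: "AE \<omega> in M. (\<lambda>j. X j \<omega>) \<longlonglongrightarrow> 0"
    and \<epsilon>: "\<epsilon> > 0"
  shows "(\<lambda>j. measure M {\<omega>\<in>space M. \<epsilon> \<le> \<bar>X j \<omega>\<bar>}) \<longlonglongrightarrow> 0"
proof -
  define B where "B j = (\<Union>l\<in>{j..}. {\<omega>\<in>space M. \<epsilon> \<le> \<bar>X l \<omega>\<bar>})" for j
  have S: "{\<omega>\<in>space M. \<epsilon> \<le> \<bar>X l \<omega>\<bar>} \<in> sets M" for l
    using meas[of l] by measurable
  have Bs: "B j \<in> sets M" for j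
    unfolding B_def using S by (intro sets.countable_UN') (auto simp: subset_eq)
  have dec: "decseq B" unfolding decseq_def B_def
    by (auto intro: order_trans)
  obtain N where N: "{x \<in> space M. \<not> (\<lambda>j. X j x) \<longlonglongrightarrow> 0} \<subseteq> N" "emeasure M N = 0" "N \<in> sets M"
    using ae by (rule AE_E)
  have sub: "(\<Inter>j. B j) \<subseteq> N"
  proof
    fix x assume x: "x \<in> (\<Inter>j. B j)"
    then have xs: "x \<in> space M" unfolding B_def by auto
    have "\<not> (\<lambda>j. X j x) \<longlonglongrightarrow> 0"
    proof
      assume "(\<lambda>j. X j x) \<longlonglongrightarrow> 0"
      from LIMSEQ_D[OF this \<epsilon>] obtain j where j: "\<forall>l\<ge>j. norm (X l x - 0) < \<epsilon>" by blast
      from x have "x \<in> B j" by blast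
      then obtain l where "l \<ge> j" "\<epsilon> \<le> \<bar>X l x\<bar>" unfolding B_def by auto
      with j show False by fastforce
    qed
    with xs N(1) show "x \<in> N" by blast
  qed
  have "emeasure M (\<Inter>j. B j) \<le> emeasure M N" using sub N(3) by (rule emeasure_mono)
  then have m0: "measure M (\<Inter>j. B j) = 0" using N(2) by (simp add: measure_def)
  have lim: "(\<lambda>j. measure M (B j)) \<longlonglongrightarrow> 0"
    using finite_Lim_measure_decseq[of B] Bs dec m0 by auto
  show ?thesis
  proof (rule tendsto_sandwich[OF _ _ tendsto_const lim])
    show "\<forall>\<^sub>F j in sequentially. 0 \<le> measure M {\<omega>\<in>space M. \<epsilon> \<le> \<bar>X j \<omega>\<bar>}" by simp
    show "\<forall>\<^sub>F j in sequentially. measure M {\<omega>\<in>space M. \<epsilon> \<le> \<bar>X j \<omega>\<bar>} \<le> measure M (B j)"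
      using Bs by (intro always_eventually allI finite_measure_mono) (auto simp: B_def)
  qed
qed

context BB begin

lemma mbs_sets: "meas_bool_section \<Lambda> M L e \<Longrightarrow> \<omega> \<in> space \<Lambda> \<Longrightarrow> e \<omega> \<in> sets (M \<omega>)"
  unfolding meas_bool_section_def by blast

lemma mbsE:
  assumes "meas_bool_section \<Lambda> M L e"
  obtains s :: "nat \<Rightarrow> 'a \<Rightarrow> 'b set" where "\<forall>k. step_section \<Lambda> L (s k)"
    "AE \<omega> in \<Lambda>. (\<lambda>k. rho (M \<omega>) (s k \<omega>) (e \<omega>)) \<longlonglongrightarrow> 0"
  using assms unfolding meas_bool_section_def by (elim conjE exE) (rule that)

lemma mbsI:
  fixes s :: "nat \<Rightarrow> 'a \<Rightarrow> 'b set"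
  assumes "\<And>\<omega>. \<omega> \<in> space \<Lambda> \<Longrightarrow> e \<omega> \<in> sets (M \<omega>)" "\<And>k. step_section \<Lambda> L (s k)"
    "AE \<omega> in \<Lambda>. (\<lambda>k. rho (M \<omega>) (s k \<omega>) (e \<omega>)) \<longlonglongrightarrow> 0"
  shows "meas_bool_section \<Lambda> M L e"
  unfolding meas_bool_section_def using assms by blast

lemma mbs_cong:
  assumes e: "meas_bool_section \<Lambda> M L e" and eq: "\<And>\<omega>. \<omega> \<in> space \<Lambda> \<Longrightarrow> e \<omega> = e' \<omega>"
  shows "meas_bool_section \<Lambda> M L e'"
proof -
  obtain s :: "nat \<Rightarrow> 'a \<Rightarrow> 'b set" where s0: "\<forall>k. step_section \<Lambda> L (s k)"
    and s2: "AE \<omega> in \<Lambda>. (\<lambda>k. rho (M \<omega>) (s k \<omega>) (e \<omega>)) \<longlonglongrightarrow> 0"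
    using e by (rule mbsE)
  note s = s0[rule_format] s2
  have "AE \<omega> in \<Lambda>. (\<lambda>k. rho (M \<omega>) (s k \<omega>) (e' \<omega>)) \<longlonglongrightarrow> 0"
    using s(2) AE_space
  proof eventually_elim
    case (elim \<omega>)
    then show ?case using eq[of \<omega>] by simp
  qed
  moreover have "\<And>\<omega>. \<omega> \<in> space \<Lambda> \<Longrightarrow> e' \<omega> \<in> sets (M \<omega>)"
    using mbs_sets[OF e] eq by metis
  ultimately show ?thesis using s(1) by (intro mbsI)
qed

lemma mbs_compl:
  assumes e: "meas_bool_section \<Lambda> M L e"
  shows "meas_bool_section \<Lambda> M L (\<lambda>\<omega>. space (M \<omega>) - e \<omega>)"
proof -
  obtain s :: "nat \<Rightarrow> 'a \<Rightarrow> 'b set" where s0: "\<forall>k. step_section \<Lambda> L (s k)"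
    and s2: "AE \<omega> in \<Lambda>. (\<lambda>k. rho (M \<omega>) (s k \<omega>) (e \<omega>)) \<longlonglongrightarrow> 0"
    using e by (rule mbsE)
  note s = s0[rule_format] s2
  have "AE \<omega> in \<Lambda>. (\<lambda>k. rho (M \<omega>) (space (M \<omega>) - s k \<omega>) (space (M \<omega>) - e \<omega>)) \<longlonglongrightarrow> 0"
    using s(2) AE_space
  proof eventually_elim
    case (elim \<omega>)
    have "rho (M \<omega>) (space (M \<omega>) - s k \<omega>) (space (M \<omega>) - e \<omega>) = rho (M \<omega>) (s k \<omega>) (e \<omega>)" for k
      using step_sets[OF s(1) elim(2)] mbs_sets[OF e elim(2)]
      by (intro rho_compl) (auto dest: sets.sets_into_space)
    then show ?case using elim(1) by simp
  qed
  then show ?thesis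
    using mbs_sets[OF e] step_compl[OF s(1)] by (intro mbsI) auto
qed

end


context BB begin

lemma mbs_diag:
  fixes w :: "nat \<Rightarrow> nat \<Rightarrow> 'a \<Rightarrow> 'b set" and F :: "nat \<Rightarrow> 'a \<Rightarrow> 'b set" and E :: "'a \<Rightarrow> 'b set"
  assumes w: "\<And>N j. step_section \<Lambda> L (w N j)"
    and Fs: "\<And>N \<omega>. \<omega> \<in> space \<Lambda> \<Longrightarrow> F N \<omega> \<in> sets (M \<omega>)"
    and Es: "\<And>\<omega>. \<omega> \<in> space \<Lambda> \<Longrightarrow> E \<omega> \<in> sets (M \<omega>)"
    and conv: "\<And>N. AE \<omega> in \<Lambda>. (\<lambda>j. rho (M \<omega>) (w N j \<omega>) (F N \<omega>)) \<longlonglongrightarrow> 0"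
    and convF: "AE \<omega> in \<Lambda>. (\<lambda>N. rho (M \<omega>) (F N \<omega>) (E \<omega>)) \<longlonglongrightarrow> 0"
  shows "meas_bool_section \<Lambda> M L E"
proof -
  interpret Lm: finite_measure \<Lambda> by (rule finL)
  define \<phi> where "\<phi> N j \<omega> = rho (M \<omega>) (w N j \<omega>) (F N \<omega>)" for N j \<omega>
  define X where "X N j \<omega> = lim (\<lambda>l. rho (M \<omega>) (w N j \<omega>) (w N l \<omega>))" for N j \<omega>
  have Xm: "X N j \<in> borel_measurable \<Lambda>" for N j
    unfolding X_def by (intro borel_measurable_lim_metric step_rho_meas w)
  have X\<phi>: "AE \<omega> in \<Lambda>. \<forall>j. X N j \<omega> = \<phi> N j \<omega>" for N
    using conv[of N] AE_space
  proof eventually_elim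
    case (elim \<omega>)
    show ?case
    proof
      fix j
      have fm: "finite_measure (M \<omega>)" using finM elim(2) .
      have ws: "w N l \<omega> \<in> sets (M \<omega>)" for l using step_sets[OF w elim(2)] .
      have "(\<lambda>l. rho (M \<omega>) (w N j \<omega>) (w N l \<omega>) - rho (M \<omega>) (w N j \<omega>) (F N \<omega>)) \<longlonglongrightarrow> 0"
      proof (rule Lim_null_comparison[OF _ elim(1)])
        show "\<forall>\<^sub>F l in sequentially. norm (rho (M \<omega>) (w N j \<omega>) (w N l \<omega>) - rho (M \<omega>) (w N j \<omega>) (F N \<omega>))
            \<le> rho (M \<omega>) (w N l \<omega>) (F N \<omega>)"
          using rho_diff_le[OF fm ws ws Fs[OF elim(2)]] by (intro always_eventually allI) simp
      qed
      then have "(\<lambda>l. rho (M \<omega>) (w N j \<omega>) (w N l \<omega>)) \<longlonglongrightarrow> rho (M \<omega>) (w N j \<omega>) (F N \<omega>)"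
        by (simp add: LIM_zero_iff)
      then show "X N j \<omega> = \<phi> N j \<omega>" unfolding X_def \<phi>_def by (rule limI)
    qed
  qed
  have X0: "AE \<omega> in \<Lambda>. (\<lambda>j. X N j \<omega>) \<longlonglongrightarrow> 0" for N
    using X\<phi>[of N] conv[of N]
  proof eventually_elim
    case (elim \<omega>)
    then show ?case by (simp add: \<phi>_def)
  qed
  define A where "A N J = {\<omega>\<in>space \<Lambda>. inverse (real (Suc N)) \<le> \<bar>X N J \<omega>\<bar>}" for N J
  have As: "A N J \<in> sets \<Lambda>" for N J unfolding A_def using Xm[of N J] by measurable
  have "\<exists>J. measure \<Lambda> (A N J) < (1/2)^N" for N
  proof -
    have "(\<lambda>j. measure \<Lambda> (A N j)) \<longlonglongrightarrow> 0"
      unfolding A_def by (rule Lm.AE_tendsto_measure[OF Xm X0]) simp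
    moreover have "(0::real) < (1/2)^N" by simp
    ultimately have "eventually (\<lambda>j. measure \<Lambda> (A N j) < (1/2)^N) sequentially"
      by (rule order_tendstoD(2))
    then show ?thesis by (metis eventually_sequentially order_refl)
  qed
  then obtain J where J: "\<And>N. measure \<Lambda> (A N (J N)) < (1/2)^N" by metis
  have BC: "AE \<omega> in \<Lambda>. eventually (\<lambda>N. \<omega> \<in> space \<Lambda> - A N (J N)) sequentially"
  proof (rule borel_cantelli_AE1)
    show "A N (J N) \<in> sets \<Lambda>" for N by (rule As)
    show "emeasure \<Lambda> (A N (J N)) < \<infinity>" for N by (simp add: less_top[symmetric])
    show "summable (\<lambda>N. measure \<Lambda> (A N (J N)))"
    proof (rule summable_comparison_test')
      show "summable (\<lambda>N. (1/2::real)^N)" by (rule summable_geometric) simp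
      show "norm (measure \<Lambda> (A N (J N))) \<le> (1/2)^N" if "N \<ge> 0" for N
        using J[of N] by simp
    qed
  qed
  have allX\<phi>: "AE \<omega> in \<Lambda>. \<forall>N. \<forall>j. X N j \<omega> = \<phi> N j \<omega>"
    using X\<phi> by (simp add: AE_all_countable)
  have "AE \<omega> in \<Lambda>. (\<lambda>N. rho (M \<omega>) (w N (J N) \<omega>) (E \<omega>)) \<longlonglongrightarrow> 0"
    using BC allX\<phi> convF AE_space
  proof eventually_elim
    case (elim \<omega>)
    have fm: "finite_measure (M \<omega>)" using finM elim(4) .
    have ev: "eventually (\<lambda>N. \<bar>\<phi> N (J N) \<omega>\<bar> < inverse (real (Suc N))) sequentially"
      using elim(1)
    proof (rule eventually_mono)
      fix N assume "\<omega> \<in> space \<Lambda> - A N (J N)"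
      then have "\<bar>X N (J N) \<omega>\<bar> < inverse (real (Suc N))" unfolding A_def by auto
      then show "\<bar>\<phi> N (J N) \<omega>\<bar> < inverse (real (Suc N))" using elim(2) by simp
    qed
    have \<phi>0: "(\<lambda>N. \<phi> N (J N) \<omega>) \<longlonglongrightarrow> 0"
    proof (rule Lim_null_comparison[OF _ LIMSEQ_inverse_real_of_nat])
      show "\<forall>\<^sub>F N in sequentially. norm (\<phi> N (J N) \<omega>) \<le> inverse (real (Suc N))"
        using ev by (rule eventually_mono) simp
    qed
    have sum0: "(\<lambda>N. \<phi> N (J N) \<omega> + rho (M \<omega>) (F N \<omega>) (E \<omega>)) \<longlonglongrightarrow> 0"
      using tendsto_add[OF \<phi>0 elim(3)] by simp
    show ?case
    proof (rule Lim_null_comparison[OF _ sum0])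
      show "\<forall>\<^sub>F N in sequentially. norm (rho (M \<omega>) (w N (J N) \<omega>) (E \<omega>)) \<le> \<phi> N (J N) \<omega> + rho (M \<omega>) (F N \<omega>) (E \<omega>)"
      proof (intro always_eventually allI)
        fix N
        have "rho (M \<omega>) (w N (J N) \<omega>) (E \<omega>) \<le> \<phi> N (J N) \<omega> + rho (M \<omega>) (F N \<omega>) (E \<omega>)"
          unfolding \<phi>_def using rho_tri[OF fm step_sets[OF w elim(4)] Fs[OF elim(4)] Es[OF elim(4)]] .
        then show "norm (rho (M \<omega>) (w N (J N) \<omega>) (E \<omega>)) \<le> \<phi> N (J N) \<omega> + rho (M \<omega>) (F N \<omega>) (E \<omega>)"
          using rho_nonneg[of "M \<omega>" "w N (J N) \<omega>" "E \<omega>"] by simp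
      qed
    qed
  qed
  then show ?thesis using Es w by (intro mbsI[where s="\<lambda>N. w N (J N)"])
qed

end


context BB begin

lemma mbs_UN:
  fixes e :: "nat \<Rightarrow> 'a \<Rightarrow> 'b set"
  assumes e: "\<And>k. meas_bool_section \<Lambda> M L (e k)"
  shows "meas_bool_section \<Lambda> M L (\<lambda>\<omega>. \<Union>k. e k \<omega>)"
proof -
  have "\<forall>k. \<exists>s :: nat \<Rightarrow> 'a \<Rightarrow> 'b set. (\<forall>j. step_section \<Lambda> L (s j)) \<and>
      (AE \<omega> in \<Lambda>. (\<lambda>j. rho (M \<omega>) (s j \<omega>) (e k \<omega>)) \<longlonglongrightarrow> 0)"
  proof
    fix k
    obtain s :: "nat \<Rightarrow> 'a \<Rightarrow> 'b set" where s0: "\<forall>j. step_section \<Lambda> L (s j)"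
      and s2: "AE \<omega> in \<Lambda>. (\<lambda>j. rho (M \<omega>) (s j \<omega>) (e k \<omega>)) \<longlonglongrightarrow> 0"
      using e[of k] by (rule mbsE)
    then show "\<exists>s :: nat \<Rightarrow> 'a \<Rightarrow> 'b set. (\<forall>j. step_section \<Lambda> L (s j)) \<and>
      (AE \<omega> in \<Lambda>. (\<lambda>j. rho (M \<omega>) (s j \<omega>) (e k \<omega>)) \<longlonglongrightarrow> 0)" by (intro exI[of _ s] conjI)
  qed
  then have "\<exists>S :: nat \<Rightarrow> nat \<Rightarrow> 'a \<Rightarrow> 'b set. \<forall>k. (\<forall>j. step_section \<Lambda> L (S k j)) \<and>
      (AE \<omega> in \<Lambda>. (\<lambda>j. rho (M \<omega>) (S k j \<omega>) (e k \<omega>)) \<longlonglongrightarrow> 0)" by (rule choice)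
  then obtain S :: "nat \<Rightarrow> nat \<Rightarrow> 'a \<Rightarrow> 'b set" where S: "\<forall>k. (\<forall>j. step_section \<Lambda> L (S k j)) \<and>
      (AE \<omega> in \<Lambda>. (\<lambda>j. rho (M \<omega>) (S k j \<omega>) (e k \<omega>)) \<longlonglongrightarrow> 0)" by (elim exE)
  have S1: "step_section \<Lambda> L (S k j)" for k j using S by simp
  have S2: "AE \<omega> in \<Lambda>. (\<lambda>j. rho (M \<omega>) (S k j \<omega>) (e k \<omega>)) \<longlonglongrightarrow> 0" for k using S by simp
  define w where "w N j = (\<lambda>\<omega>. \<Union>k<N. S k j \<omega>)" for N j
  define F where "F N = (\<lambda>\<omega>. \<Union>k<N. e k \<omega>)" for N
  define E where "E = (\<lambda>\<omega>. \<Union>k. e k \<omega>)"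
  have es: "e k \<omega> \<in> sets (M \<omega>)" if "\<omega> \<in> space \<Lambda>" for k \<omega> using mbs_sets[OF e that] .
  have w: "step_section \<Lambda> L (w N j)" for N j
  proof (induction N)
    case 0
    have "w 0 j = (\<lambda>\<omega>. {})" unfolding w_def by simp
    then show ?case using step_L[OF L_empty] by simp
  next
    case (Suc N)
    have "w (Suc N) j = (\<lambda>\<omega>. w N j \<omega> \<union> S N j \<omega>)" unfolding w_def by (auto simp: lessThan_Suc)
    then show ?case using step_Un[OF Suc S1] by simp
  qed
  have Fs: "F N \<omega> \<in> sets (M \<omega>)" if "\<omega> \<in> space \<Lambda>" for N \<omega>
    unfolding F_def using es[OF that] by auto
  have Es: "E \<omega> \<in> sets (M \<omega>)" if "\<omega> \<in> space \<Lambda>" for \<omega>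
    unfolding E_def using es[OF that] by auto
  have conv: "AE \<omega> in \<Lambda>. (\<lambda>j. rho (M \<omega>) (w N j \<omega>) (F N \<omega>)) \<longlonglongrightarrow> 0" for N
  proof -
    have "AE \<omega> in \<Lambda>. \<forall>k. (\<lambda>j. rho (M \<omega>) (S k j \<omega>) (e k \<omega>)) \<longlonglongrightarrow> 0"
      using S2 by (simp add: AE_all_countable)
    then show ?thesis using AE_space
    proof eventually_elim
      case (elim \<omega>)
      have fm: "finite_measure (M \<omega>)" using finM elim(2) .
      have sum0: "(\<lambda>j. \<Sum>k<N. rho (M \<omega>) (S k j \<omega>) (e k \<omega>)) \<longlonglongrightarrow> 0"
        using elim(1) by (intro tendsto_null_sum) auto
      show ?case
      proof (rule Lim_null_comparison[OF _ sum0])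
        show "\<forall>\<^sub>F j in sequentially. norm (rho (M \<omega>) (w N j \<omega>) (F N \<omega>)) \<le> (\<Sum>k<N. rho (M \<omega>) (S k j \<omega>) (e k \<omega>))"
        proof (intro always_eventually allI)
          fix j
          have "rho (M \<omega>) (w N j \<omega>) (F N \<omega>) \<le> (\<Sum>k<N. rho (M \<omega>) (S k j \<omega>) (e k \<omega>))"
            unfolding w_def F_def
            using rho_UN_lessThan[OF fm, of "\<lambda>k. S k j \<omega>" "\<lambda>k. e k \<omega>" N] step_sets[OF S1 elim(2)] es[OF elim(2)]
            by simp
          then show "norm (rho (M \<omega>) (w N j \<omega>) (F N \<omega>)) \<le> (\<Sum>k<N. rho (M \<omega>) (S k j \<omega>) (e k \<omega>))"
            using rho_nonneg[of "M \<omega>" "w N j \<omega>" "F N \<omega>"] by simp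
        qed
      qed
    qed
  qed
  have convF: "AE \<omega> in \<Lambda>. (\<lambda>N. rho (M \<omega>) (F N \<omega>) (E \<omega>)) \<longlonglongrightarrow> 0"
  proof (rule AE_I2)
    fix \<omega> assume w: "\<omega> \<in> space \<Lambda>"
    interpret Mw: finite_measure "M \<omega>" using finM w .
    have eq: "rho (M \<omega>) (F N \<omega>) (E \<omega>) = measure (M \<omega>) (E \<omega> - F N \<omega>)" for N
    proof -
      have "(F N \<omega> - E \<omega>) \<union> (E \<omega> - F N \<omega>) = E \<omega> - F N \<omega>" unfolding F_def E_def by auto
      then show ?thesis by (simp add: rho_def)
    qed
    have lim: "(\<lambda>N. measure (M \<omega>) (E \<omega> - F N \<omega>)) \<longlonglongrightarrow> measure (M \<omega>) (\<Inter>N. E \<omega> - F N \<omega>)"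
    proof (rule Mw.finite_Lim_measure_decseq)
      show "range (\<lambda>N. E \<omega> - F N \<omega>) \<subseteq> sets (M \<omega>)" using Es[OF w] Fs[OF w] by auto
      show "decseq (\<lambda>N. E \<omega> - F N \<omega>)" unfolding decseq_def F_def by auto
    qed
    have emp: "(\<Inter>N. E \<omega> - F N \<omega>) = {}"
    proof -
      have "x \<notin> E \<omega> - F (Suc k) \<omega>" if "x \<in> e k \<omega>" for x k using that unfolding F_def by auto
      then show ?thesis unfolding E_def by blast
    qed
    have "(\<lambda>N. measure (M \<omega>) (E \<omega> - F N \<omega>)) \<longlonglongrightarrow> 0" using lim unfolding emp by simp
    then show "(\<lambda>N. rho (M \<omega>) (F N \<omega>) (E \<omega>)) \<longlonglongrightarrow> 0" by (simp add: eq)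
  qed
  show ?thesis using mbs_diag[OF w Fs Es conv convF] unfolding E_def .
qed

end


lemma ereal_max_fin:
  fixes a c :: real and b :: ereal
  assumes "b \<le> ereal c"
  shows "ereal (real_of_ereal (max (ereal a) b)) = max (ereal a) b"
  using assms by (cases b) (auto simp: max_def)

lemma ereal_fin_ne:
  fixes c :: real and b :: ereal
  assumes "b \<le> ereal c" "b \<noteq> -\<infinity>"
  shows "ereal (real_of_ereal b) = b"
  using assms by (cases b) auto

lemma minf_iff:
  fixes c :: real and b :: ereal
  assumes "b \<le> ereal c"
  shows "b = -\<infinity> \<longleftrightarrow> (\<forall>k::nat. b < ereal (- real k))"
proof
  assume "b = -\<infinity>" then show "\<forall>k::nat. b < ereal (- real k)" by simp
next
  assume H: "\<forall>k::nat. b < ereal (- real k)"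
  show "b = -\<infinity>"
  proof (cases b)
    case (real r)
    obtain k :: nat where "real k > - r" using reals_Archimedean2 by blast
    then show ?thesis using H[rule_format, of k] real by simp
  qed (use assms in auto)
qed

context BB begin

lemma mbs_Un:
  assumes a: "meas_bool_section \<Lambda> M L a" and b: "meas_bool_section \<Lambda> M L b"
  shows "meas_bool_section \<Lambda> M L (\<lambda>\<omega>. a \<omega> \<union> b \<omega>)"
proof -
  define e where "e k = (if k = (0::nat) then a else b)" for k
  have "meas_bool_section \<Lambda> M L (e k)" for k using a b by (simp add: e_def)
  then have "meas_bool_section \<Lambda> M L (\<lambda>\<omega>. \<Union>k. e k \<omega>)" by (rule mbs_UN)
  moreover have "(\<Union>k. e k \<omega>) = a \<omega> \<union> b \<omega>" for \<omega>
  proof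
    show "(\<Union>k. e k \<omega>) \<subseteq> a \<omega> \<union> b \<omega>" by (auto simp: e_def split: if_splits)
    show "a \<omega> \<union> b \<omega> \<subseteq> (\<Union>k. e k \<omega>)"
    proof
      fix x assume "x \<in> a \<omega> \<union> b \<omega>"
      then show "x \<in> (\<Union>k. e k \<omega>)"
      proof
        assume "x \<in> a \<omega>" then show ?thesis by (intro UN_I[of 0]) (auto simp: e_def)
      next
        assume "x \<in> b \<omega>" then show ?thesis by (intro UN_I[of 1]) (auto simp: e_def)
      qed
    qed
  qed
  ultimately show ?thesis by simp
qed

lemma mbs_sub: "meas_bool_section \<Lambda> M L e \<Longrightarrow> \<omega> \<in> space \<Lambda> \<Longrightarrow> e \<omega> \<subseteq> space (M \<omega>)"
  using mbs_sets sets.sets_into_space by metis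

lemma mbs_Int:
  assumes a: "meas_bool_section \<Lambda> M L a" and b: "meas_bool_section \<Lambda> M L b"
  shows "meas_bool_section \<Lambda> M L (\<lambda>\<omega>. a \<omega> \<inter> b \<omega>)"
proof (rule mbs_cong)
  show "meas_bool_section \<Lambda> M L (\<lambda>\<omega>. space (M \<omega>) - ((space (M \<omega>) - a \<omega>) \<union> (space (M \<omega>) - b \<omega>)))"
    by (intro mbs_compl mbs_Un a b)
  fix \<omega> assume "\<omega> \<in> space \<Lambda>"
  then show "space (M \<omega>) - ((space (M \<omega>) - a \<omega>) \<union> (space (M \<omega>) - b \<omega>)) = a \<omega> \<inter> b \<omega>"
    using mbs_sub[OF a] mbs_sub[OF b] by auto
qed

lemma mbs_INT:
  fixes e :: "nat \<Rightarrow> 'a \<Rightarrow> 'b set"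
  assumes e: "\<And>k. meas_bool_section \<Lambda> M L (e k)"
  shows "meas_bool_section \<Lambda> M L (\<lambda>\<omega>. \<Inter>k. e k \<omega>)"
proof (rule mbs_cong)
  show "meas_bool_section \<Lambda> M L (\<lambda>\<omega>. space (M \<omega>) - (\<Union>k. space (M \<omega>) - e k \<omega>))"
    by (intro mbs_compl mbs_UN e)
  fix \<omega> assume w: "\<omega> \<in> space \<Lambda>"
  have "e k \<omega> \<subseteq> space (M \<omega>)" for k using mbs_sub[OF e w] .
  then show "space (M \<omega>) - (\<Union>k. space (M \<omega>) - e k \<omega>) = (\<Inter>k. e k \<omega>)" by blast
qed

end


theorem corollary3p2:
  fixes \<Lambda> :: "'a measure" and M :: "'a \<Rightarrow> 'b measure" and L :: "('a \<Rightarrow> 'b set) set"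
    and f :: "nat \<Rightarrow> 'a \<Rightarrow> 'b \<Rightarrow> real"
  assumes "bool_bundle \<Lambda> M L"
    and "\<And>n. L0_section \<Lambda> M L (f n)"
  shows "((\<exists>g. is_inf_hat \<Lambda> M L f g) \<longleftrightarrow>
            (AE \<omega> in \<Lambda>. \<exists>h. is_inf_L0 (M \<omega>) (\<lambda>n. f n \<omega>) h))
         \<and> (\<forall>g. is_inf_hat \<Lambda> M L f g \<longrightarrow> (AE \<omega> in \<Lambda>. is_inf_L0 (M \<omega>) (\<lambda>n. f n \<omega>) (g \<omega>)))"
proof -
  interpret BB \<Lambda> M L by (rule BB.intro) (rule assms(1))
  have fmeas: "f n \<omega> \<in> borel_measurable (M \<omega>)" if "\<omega> \<in> space \<Lambda>" for n \<omega>
    using assms(2)[of n] that unfolding L0_section_def by blast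
  have fsp: "meas_bool_section \<Lambda> M L (\<lambda>\<omega>. {x \<in> space (M \<omega>). f n \<omega> x < t})" for n t
    using assms(2)[of n] unfolding L0_section_def by blast
  define m where "m \<omega> x = (INF n. ereal (f n \<omega> x))" for \<omega> x
  have mlt: "m \<omega> x < ereal t \<longleftrightarrow> (\<exists>n. f n \<omega> x < t)" for \<omega> x t
    by (simp add: m_def INF_less_iff)
  have mle: "m \<omega> x \<le> ereal (f n \<omega> x)" for \<omega> x n
    unfolding m_def by (rule INF_lower) simp
  have mge: "ereal u \<le> m \<omega> x" if "\<forall>n. u \<le> f n \<omega> x" for \<omega> x u
    unfolding m_def using that by (intro INF_greatest) simp
  have mmeas: "(\<lambda>x. m \<omega> x) \<in> borel_measurable (M \<omega>)" if "\<omega> \<in> space \<Lambda>" for \<omega>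
    unfolding m_def using fmeas[OF that] by measurable

  have P1: "AE \<omega> in \<Lambda>. is_inf_L0 (M \<omega>) (\<lambda>n. f n \<omega>) (g \<omega>)" if G: "is_inf_hat \<Lambda> M L f g" for g
  proof -
    have G1: "L0_section \<Lambda> M L g" and G2: "\<And>n. hat_le \<Lambda> M g (f n)"
      and G3: "\<And>h. L0_section \<Lambda> M L h \<Longrightarrow> (\<forall>n. hat_le \<Lambda> M h (f n)) \<Longrightarrow> hat_le \<Lambda> M h g"
      using G unfolding is_inf_hat_def by blast+
    have gmeas: "g \<omega> \<in> borel_measurable (M \<omega>)" if "\<omega> \<in> space \<Lambda>" for \<omega>
      using G1 that unfolding L0_section_def by blast
    have gsp: "meas_bool_section \<Lambda> M L (\<lambda>\<omega>. {x \<in> space (M \<omega>). g \<omega> x < t})" for t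
      using G1 unfolding L0_section_def by blast
    define h where "h \<omega> x = real_of_ereal (max (ereal (g \<omega> x)) (m \<omega> x))" for \<omega> x
    have hE: "ereal (h \<omega> x) = max (ereal (g \<omega> x)) (m \<omega> x)" for \<omega> x
      unfolding h_def using mle[of \<omega> x 0] by (rule ereal_max_fin)
    have hlt: "h \<omega> x < t \<longleftrightarrow> g \<omega> x < t \<and> (\<exists>n. f n \<omega> x < t)" for \<omega> x t
    proof -
      have "h \<omega> x < t \<longleftrightarrow> ereal (h \<omega> x) < ereal t" by simp
      also have "\<dots> \<longleftrightarrow> ereal (g \<omega> x) < ereal t \<and> m \<omega> x < ereal t" unfolding hE by simp
      finally show ?thesis using mlt by simp
    qed
    have hL0: "L0_section \<Lambda> M L h"
      unfolding L0_section_def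
    proof (intro conjI ballI allI)
      fix \<omega> assume w: "\<omega> \<in> space \<Lambda>"
      show "h \<omega> \<in> borel_measurable (M \<omega>)"
        unfolding h_def using gmeas[OF w] mmeas[OF w] by measurable
    next
      fix t
      have "meas_bool_section \<Lambda> M L (\<lambda>\<omega>. {x \<in> space (M \<omega>). g \<omega> x < t} \<inter> (\<Union>n. {x \<in> space (M \<omega>). f n \<omega> x < t}))"
        by (intro mbs_Int gsp mbs_UN fsp)
      moreover have "(\<lambda>\<omega>. {x \<in> space (M \<omega>). g \<omega> x < t} \<inter> (\<Union>n. {x \<in> space (M \<omega>). f n \<omega> x < t}))
          = (\<lambda>\<omega>. {x \<in> space (M \<omega>). h \<omega> x < t})"
        using hlt by auto
      ultimately show "meas_bool_section \<Lambda> M L (\<lambda>\<omega>. {x \<in> space (M \<omega>). h \<omega> x < t})" by simp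
    qed
    have "hat_le \<Lambda> M h (f n)" for n
      using G2[of n] unfolding hat_le_def
    proof eventually_elim
      case (elim \<omega>)
      then show ?case
      proof eventually_elim
        case (elim x)
        then have "ereal (h \<omega> x) \<le> ereal (f n \<omega> x)" unfolding hE using mle[of \<omega> x n] by simp
        then show ?case by simp
      qed
    qed
    then have hg: "hat_le \<Lambda> M h g" using G3[OF hL0] by blast
    have G2': "AE \<omega> in \<Lambda>. \<forall>n. AE x in M \<omega>. g \<omega> x \<le> f n \<omega> x"
      using G2 unfolding hat_le_def by (simp add: AE_all_countable)
    show ?thesis
      using hg[unfolded hat_le_def] G2' AE_space
    proof eventually_elim
      case (elim \<omega>)
      show ?case unfolding is_inf_L0_def
      proof (intro conjI ballI impI)
        show "g \<omega> \<in> borel_measurable (M \<omega>)" using gmeas[OF elim(3)] .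
        show "\<forall>n. AE x in M \<omega>. g \<omega> x \<le> f n \<omega> x" using elim(2) .
        fix u assume "u \<in> borel_measurable (M \<omega>)" and U: "\<forall>n. AE x in M \<omega>. u x \<le> f n \<omega> x"
        then have "AE x in M \<omega>. \<forall>n. u x \<le> f n \<omega> x" by (simp add: AE_all_countable)
        then show "AE x in M \<omega>. u x \<le> g \<omega> x" using elim(1)
        proof eventually_elim
          case (elim x)
          have "ereal (u x) \<le> m \<omega> x" using mge elim(1) by blast
          also have "\<dots> \<le> ereal (h \<omega> x)" unfolding hE by simp
          also have "\<dots> \<le> ereal (g \<omega> x)" using elim(2) by simp
          finally show ?case by simp
        qed
      qed
    qed
  qed

  have P2: "\<exists>g. is_inf_hat \<Lambda> M L f g" if H: "AE \<omega> in \<Lambda>. \<exists>h. is_inf_L0 (M \<omega>) (\<lambda>n. f n \<omega>) h"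
  proof -
    define g where "g \<omega> x = (if m \<omega> x = -\<infinity> then f 0 \<omega> x else real_of_ereal (m \<omega> x))" for \<omega> x
    have gE: "m \<omega> x \<noteq> -\<infinity> \<Longrightarrow> ereal (g \<omega> x) = m \<omega> x" for \<omega> x
      unfolding g_def using ereal_fin_ne[OF mle[of \<omega> x 0]] by simp
    have minf: "m \<omega> x = -\<infinity> \<longleftrightarrow> (\<forall>k::nat. \<exists>n. f n \<omega> x < - real k)" for \<omega> x
      using minf_iff[OF mle[of \<omega> x 0]] mlt by simp
    define Ninf where "Ninf \<omega> = (\<Inter>k::nat. \<Union>n. {x \<in> space (M \<omega>). f n \<omega> x < - real k})" for \<omega>
    have Ninf_eq: "Ninf \<omega> = {x \<in> space (M \<omega>). m \<omega> x = -\<infinity>}" for \<omega>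
      unfolding Ninf_def minf by auto
    have Ninf_mbs: "meas_bool_section \<Lambda> M L Ninf"
      unfolding Ninf_def by (intro mbs_INT mbs_UN fsp)
    have gL0: "L0_section \<Lambda> M L g"
      unfolding L0_section_def
    proof (intro conjI ballI allI)
      fix \<omega> assume w: "\<omega> \<in> space \<Lambda>"
      show "g \<omega> \<in> borel_measurable (M \<omega>)"
        unfolding g_def using fmeas[OF w] mmeas[OF w] by measurable
    next
      fix t
      have "meas_bool_section \<Lambda> M L (\<lambda>\<omega>. ((space (M \<omega>) - Ninf \<omega>) \<inter> (\<Union>n. {x \<in> space (M \<omega>). f n \<omega> x < t}))
           \<union> (Ninf \<omega> \<inter> {x \<in> space (M \<omega>). f 0 \<omega> x < t}))"
        by (intro mbs_Un mbs_Int mbs_compl Ninf_mbs mbs_UN fsp)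
      moreover have "(\<lambda>\<omega>. ((space (M \<omega>) - Ninf \<omega>) \<inter> (\<Union>n. {x \<in> space (M \<omega>). f n \<omega> x < t}))
           \<union> (Ninf \<omega> \<inter> {x \<in> space (M \<omega>). f 0 \<omega> x < t})) = (\<lambda>\<omega>. {x \<in> space (M \<omega>). g \<omega> x < t})"
      proof (intro ext set_eqI)
        fix \<omega> x
        have "m \<omega> x \<noteq> -\<infinity> \<Longrightarrow> (g \<omega> x < t \<longleftrightarrow> (\<exists>n. f n \<omega> x < t))"
          using gE[of \<omega> x] mlt[of \<omega> x t] by (metis less_ereal.simps(1))
        moreover have "m \<omega> x = -\<infinity> \<Longrightarrow> g \<omega> x = f 0 \<omega> x" unfolding g_def by simp
        ultimately show "x \<in> ((space (M \<omega>) - Ninf \<omega>) \<inter> (\<Union>n. {x \<in> space (M \<omega>). f n \<omega> x < t}))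
           \<union> (Ninf \<omega> \<inter> {x \<in> space (M \<omega>). f 0 \<omega> x < t}) \<longleftrightarrow> x \<in> {x \<in> space (M \<omega>). g \<omega> x < t}"
          unfolding Ninf_eq by (cases "m \<omega> x = -\<infinity>") auto
      qed
      ultimately show "meas_bool_section \<Lambda> M L (\<lambda>\<omega>. {x \<in> space (M \<omega>). g \<omega> x < t})" by simp
    qed
    have good: "AE \<omega> in \<Lambda>. AE x in M \<omega>. m \<omega> x \<noteq> -\<infinity>"
      using H
    proof eventually_elim
      case (elim \<omega>)
      then obtain h where h: "is_inf_L0 (M \<omega>) (\<lambda>n. f n \<omega>) h" by blast
      then have "AE x in M \<omega>. \<forall>n. h x \<le> f n \<omega> x"
        unfolding is_inf_L0_def by (simp add: AE_all_countable)
      then show ?case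
      proof eventually_elim
        case (elim x)
        then have "ereal (h x) \<le> m \<omega> x" using mge by blast
        then show ?case by auto
      qed
    qed
    have "is_inf_hat \<Lambda> M L f g"
      unfolding is_inf_hat_def
    proof (intro conjI allI impI gL0)
      fix n
      show "hat_le \<Lambda> M g (f n)" unfolding hat_le_def using good
      proof eventually_elim
        case (elim \<omega>)
        then show ?case
        proof eventually_elim
          case (elim x)
          have "ereal (g \<omega> x) \<le> ereal (f n \<omega> x)" using gE[OF elim] mle[of \<omega> x n] by simp
          then show ?case by simp
        qed
      qed
    next
      fix u assume U: "L0_section \<Lambda> M L u \<and> (\<forall>n. hat_le \<Lambda> M u (f n))"
      then have "AE \<omega> in \<Lambda>. \<forall>n. AE x in M \<omega>. u \<omega> x \<le> f n \<omega> x"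
        unfolding hat_le_def by (simp add: AE_all_countable)
      then show "hat_le \<Lambda> M u g" unfolding hat_le_def using good
      proof eventually_elim
        case (elim \<omega>)
        have "AE x in M \<omega>. \<forall>n. u \<omega> x \<le> f n \<omega> x" using elim(1) by (simp add: AE_all_countable)
        then show ?case using elim(2)
        proof eventually_elim
          case (elim x)
          have "ereal (u \<omega> x) \<le> m \<omega> x" using mge elim(1) by blast
          also have "\<dots> = ereal (g \<omega> x)" using gE[OF elim(2)] by simp
          finally show ?case by simp
        qed
      qed
    qed
    then show ?thesis by blast
  qed

  show ?thesis
  proof (intro conjI allI impI iffI)
    assume "\<exists>g. is_inf_hat \<Lambda> M L f g"
    then obtain g where "is_inf_hat \<Lambda> M L f g" by blast
    from P1[OF this] show "AE \<omega> in \<Lambda>. \<exists>h. is_inf_L0 (M \<omega>) (\<lambda>n. f n \<omega>) h"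
      by (rule AE_mp) (intro AE_I2 impI exI)
  next
    assume "AE \<omega> in \<Lambda>. \<exists>h. is_inf_L0 (M \<omega>) (\<lambda>n. f n \<omega>) h"
    then show "\<exists>g. is_inf_hat \<Lambda> M L f g" by (rule P2)
  next
    fix g assume "is_inf_hat \<Lambda> M L f g"
    then show "AE \<omega> in \<Lambda>. is_inf_L0 (M \<omega>) (\<lambda>n. f n \<omega>) (g \<omega>)" by (rule P1)
  qed
qed


end
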